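(* Let $R,R',R''$ be Hecke symmetries with the same parameter $q$ on finite dimensional spaces $V,V',V''$. Suppose that for each $n>1$ every indecomposable direct summand of the $\mathcal H_n$-module $V'^{\otimes n}$ is isomorphic to a direct summand of the $\mathcal H_n$-module $V^{\otimes n}$. Then the algebra homomorphism $\Delta_{R',R,R''}$ gives an isomorphism of algebras $A(R',R'')\cong A(R',R)\,\square_{A(R)}\,A(R,R'')$.
   Context: A Hecke symmetry with parameter $0\neq q\in\Bbbk$ on $V$ is an operator $R$ on $V\otimes V$ with $(R+\mathrm{id})(R-q\,\mathrm{id})=0$ and the braid relation; $V^{\otimes n}$ becomes an $\mathcal H_n(q)$-module with $T_i$ acting by $R$ on positions $i,i+1$. For Hecke symmetries $R_1,R_2$ (same $q$) on $W_1,W_2$, $A(R_2,R_1)$ is the quotient of $\mathbb T(W_2^*\otimes W_1)$ by the ideal generated by $\operatorname{Im}(\mathcal R-\mathrm{id})$, where $\mathcal R$ corresponds to $(R_2^* )^{-1}\otimes R_1$ under $(W_2^*\otimes W_1)^{\otimes2}\cong(W_2^* )^{\otimes2}\otimes W_1^{\otimes2}$ ($R_2^*$ the adjoint of $R_2$); one has $A_n(R_2,R_1)\cong\operatorname{Hom}_{\mathcal H_n}(W_1^{\otimes n},W_2^{\otimes n})^*$. $A(R)=A(R,R)$. The map $\Delta_{R',R,R''}:A(R',R'')\to A(R',R)\otimes A(R,R'')$ is defined in each degree $n$ as the map dual to composition $\operatorname{Hom}_{\mathcal H_n}(V^{\otimes n},V'^{\otimes n})\otimes\operatorname{Hom}_{\mathcal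 H_n}(V''^{\otimes n},V^{\otimes n})\to\operatorname{Hom}_{\mathcal H_n}(V''^{\otimes n},V'^{\otimes n})$; it is an algebra homomorphism, $A(R)$ is a bialgebra with comultiplication $\Delta_{R,R,R}$, and $A(R',R)$, $A(R,R'')$ are a right, resp. left, $A(R)$-comodule via $\Delta_{R',R,R}$, resp. $\Delta_{R,R,R''}$. For a coalgebra $C$, right comodule $X$ (coaction $\rho$) and left comodule $Y$ (coaction $\lambda$), the cotensor product $X\square_CY$ is the kernel of $\rho\otimes\mathrm{id}-\mathrm{id}\otimes\lambda:X\otimes Y\to X\otimes C\otimes Y$. *)

theory Defs
  imports Main
begin

text \<open>Concrete coordinates: a finite dimensional space V is k^d with basis x_0..x_(d-1).
  V^(tensor n) is the space of functions on words of length n over {..<d}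
  (vanishing outside these words). A Hecke symmetry R on V is given by its matrix:
  R(x_c tensor x_e) = sum over a,b of R a b c e times x_a tensor x_b.\<close>

definition words :: "nat \<Rightarrow> nat \<Rightarrow> nat list set" where
  "words d n = {w. length w = n \<and> set w \<subseteq> {..<d}}"

definition tspace :: "nat \<Rightarrow> nat \<Rightarrow> (nat list \<Rightarrow> 'k::zero) set" where
  "tspace d n = {v. \<forall>w. w \<notin> words d n \<longrightarrow> v w = 0}"

definition Rop :: "(nat \<Rightarrow> nat \<Rightarrow> nat \<Rightarrow> nat \<Rightarrow> 'k::comm_ring_1) \<Rightarrow> nat \<Rightarrow> nat \<Rightarrow> nat
    \<Rightarrow> (nat list \<Rightarrow> 'k) \<Rightarrow> nat list \<Rightarrow> 'k" where
  "Rop R d n i v = (\<lambda>w. if w \<in> words d n then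
       (\<Sum>c<d. \<Sum>e<d. R (w!i) (w!Suc i) c e * v (w[i := c, Suc i := e])) else 0)"

definition hecke_symmetry :: "'k::field \<Rightarrow> nat \<Rightarrow> (nat \<Rightarrow> nat \<Rightarrow> nat \<Rightarrow> nat \<Rightarrow> 'k) \<Rightarrow> bool" where
  "hecke_symmetry q d R \<longleftrightarrow> q \<noteq> 0
     \<and> (\<forall>v\<in>tspace d 2. Rop R d 2 0 (Rop R d 2 0 v) = (\<lambda>w. (q - 1) * Rop R d 2 0 v w + q * v w))
     \<and> (\<forall>v\<in>tspace d 3. Rop R d 3 0 (Rop R d 3 1 (Rop R d 3 0 v))
                       = Rop R d 3 1 (Rop R d 3 0 (Rop R d 3 1 v)))"

text \<open>H_n-submodules of V^(tensor n): subspaces stable under all T_i (the T_i generate H_n).\<close>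
definition hsubmod :: "(nat \<Rightarrow> nat \<Rightarrow> nat \<Rightarrow> nat \<Rightarrow> 'k::field) \<Rightarrow> nat \<Rightarrow> nat \<Rightarrow> (nat list \<Rightarrow> 'k) set \<Rightarrow> bool" where
  "hsubmod R d n U \<longleftrightarrow> U \<subseteq> tspace d n \<and> (\<lambda>w. 0) \<in> U
     \<and> (\<forall>u\<in>U. \<forall>v\<in>U. (\<lambda>w. u w + v w) \<in> U)
     \<and> (\<forall>c. \<forall>u\<in>U. (\<lambda>w. c * u w) \<in> U)
     \<and> (\<forall>i. Suc i < n \<longrightarrow> (\<forall>u\<in>U. Rop R d n i u \<in> U))"

definition hsummand :: "(nat \<Rightarrow> nat \<Rightarrow> nat \<Rightarrow> nat \<Rightarrow> 'k::field) \<Rightarrow> nat \<Rightarrow> nat \<Rightarrow> (nat list \<Rightarrow> 'k) set \<Rightarrow> bool" where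
  "hsummand R d n U \<longleftrightarrow> hsubmod R d n U \<and>
     (\<exists>U'. hsubmod R d n U' \<and> U \<inter> U' = {\<lambda>w. 0}
        \<and> (\<forall>v\<in>tspace d n. \<exists>u\<in>U. \<exists>u'\<in>U'. v = (\<lambda>w. u w + u' w)))"

definition hindec :: "(nat \<Rightarrow> nat \<Rightarrow> nat \<Rightarrow> nat \<Rightarrow> 'k::field) \<Rightarrow> nat \<Rightarrow> nat \<Rightarrow> (nat list \<Rightarrow> 'k) set \<Rightarrow> bool" where
  "hindec R d n U \<longleftrightarrow> U \<noteq> {\<lambda>w. 0} \<and>
     \<not> (\<exists>U1 U2. hsubmod R d n U1 \<and> hsubmod R d n U2 \<and> U1 \<subseteq> U \<and> U2 \<subseteq> U
          \<and> U1 \<noteq> {\<lambda>w. 0} \<and> U2 \<noteq> {\<lambda>w. 0} \<and> U1 \<inter> U2 = {\<lambda>w. 0}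
          \<and> (\<forall>u\<in>U. \<exists>u1\<in>U1. \<exists>u2\<in>U2. u = (\<lambda>w. u1 w + u2 w)))"

definition hiso :: "(nat \<Rightarrow> nat \<Rightarrow> nat \<Rightarrow> nat \<Rightarrow> 'k::field) \<Rightarrow> nat \<Rightarrow> nat \<Rightarrow> (nat list \<Rightarrow> 'k) set
    \<Rightarrow> (nat \<Rightarrow> nat \<Rightarrow> nat \<Rightarrow> nat \<Rightarrow> 'k) \<Rightarrow> nat \<Rightarrow> (nat list \<Rightarrow> 'k) set \<Rightarrow> bool" where
  "hiso R1 d1 n U R2 d2 W \<longleftrightarrow> (\<exists>\<phi>. bij_betw \<phi> U W
     \<and> (\<forall>u\<in>U. \<forall>v\<in>U. \<phi> (\<lambda>w. u w + v w) = (\<lambda>w. \<phi> u w + \<phi> v w))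
     \<and> (\<forall>c. \<forall>u\<in>U. \<phi> (\<lambda>w. c * u w) = (\<lambda>w. c * \<phi> u w))
     \<and> (\<forall>i. Suc i < n \<longrightarrow> (\<forall>u\<in>U. \<phi> (Rop R1 d1 n i u) = Rop R2 d2 n i (\<phi> u))))"

text \<open>Linear maps V1^(tensor n) -> V2^(tensor n) as matrices M w u (w output word, u input word).\<close>
definition mapply :: "nat \<Rightarrow> nat \<Rightarrow> (nat list \<Rightarrow> nat list \<Rightarrow> 'k::comm_ring_1) \<Rightarrow> (nat list \<Rightarrow> 'k) \<Rightarrow> nat list \<Rightarrow> 'k" where
  "mapply d n M v = (\<lambda>w. \<Sum>u\<in>words d n. M w u * v u)"

definition mcomp :: "nat \<Rightarrow> nat \<Rightarrow> (nat list \<Rightarrow> nat list \<Rightarrow> 'k::comm_ring_1)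
    \<Rightarrow> (nat list \<Rightarrow> nat list \<Rightarrow> 'k) \<Rightarrow> nat list \<Rightarrow> nat list \<Rightarrow> 'k" where
  "mcomp d n M N = (\<lambda>w u. \<Sum>x\<in>words d n. M w x * N x u)"

definition HomH :: "(nat \<Rightarrow> nat \<Rightarrow> nat \<Rightarrow> nat \<Rightarrow> 'k::field) \<Rightarrow> nat
    \<Rightarrow> (nat \<Rightarrow> nat \<Rightarrow> nat \<Rightarrow> nat \<Rightarrow> 'k) \<Rightarrow> nat \<Rightarrow> nat \<Rightarrow> (nat list \<Rightarrow> nat list \<Rightarrow> 'k) set" where
  "HomH R1 d1 R2 d2 n = {M. (\<forall>w u. w \<notin> words d2 n \<or> u \<notin> words d1 n \<longrightarrow> M w u = 0)
     \<and> (\<forall>i. Suc i < n \<longrightarrow> (\<forall>v\<in>tspace d1 n.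
            mapply d1 n M (Rop R1 d1 n i v) = Rop R2 d2 n i (mapply d1 n M v)))}"

definition linfun :: "(nat list \<Rightarrow> nat list \<Rightarrow> 'k::field) set \<Rightarrow> ((nat list \<Rightarrow> nat list \<Rightarrow> 'k) \<Rightarrow> 'k) \<Rightarrow> bool" where
  "linfun S \<psi> \<longleftrightarrow> (\<forall>x\<in>S. \<forall>y\<in>S. \<psi> (\<lambda>w u. x w u + y w u) = \<psi> x + \<psi> y)
     \<and> (\<forall>c. \<forall>x\<in>S. \<psi> (\<lambda>w u. c * x w u) = c * \<psi> x)"

definition bilin :: "(nat list \<Rightarrow> nat list \<Rightarrow> 'k::field) set \<Rightarrow> (nat list \<Rightarrow> nat list \<Rightarrow> 'k) set
    \<Rightarrow> ((nat list \<Rightarrow> nat list \<Rightarrow> 'k) \<Rightarrow> (nat list \<Rightarrow> nat list \<Rightarrow> 'k) \<Rightarrow> 'k) \<Rightarrow> bool" where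
  "bilin S T \<Phi> \<longleftrightarrow> (\<forall>y\<in>T. linfun S (\<lambda>x. \<Phi> x y)) \<and> (\<forall>x\<in>S. linfun T (\<lambda>y. \<Phi> x y))"

text \<open>Degree n part of Delta_{R',R,R''}: dual of composition,
  psi |-> (f,h) |-> psi(f o h), elements of X^* tensor Y^* being identified with
  bilinear forms on X x Y (X,Y finite dimensional).\<close>
definition delta :: "nat \<Rightarrow> nat \<Rightarrow> ((nat list \<Rightarrow> nat list \<Rightarrow> 'k::field) \<Rightarrow> 'k)
    \<Rightarrow> (nat list \<Rightarrow> nat list \<Rightarrow> 'k) \<Rightarrow> (nat list \<Rightarrow> nat list \<Rightarrow> 'k) \<Rightarrow> 'k" where
  "delta d n \<psi> = (\<lambda>f h. \<psi> (mcomp d n f h))"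

text \<open>Degree n part of the cotensor product A(R',R) cotensor_{A(R)} A(R,R''):
  bilinear forms Phi on X x Y with (rho tensor id)Phi = (id tensor lambda)Phi, i.e.
  Phi(f o g, h) = Phi(f, g o h) for all g in C = End_{H_n}(V^(tensor n)).\<close>
definition cotensor :: "nat \<Rightarrow> nat \<Rightarrow> (nat list \<Rightarrow> nat list \<Rightarrow> 'k::field) set
    \<Rightarrow> (nat list \<Rightarrow> nat list \<Rightarrow> 'k) set \<Rightarrow> (nat list \<Rightarrow> nat list \<Rightarrow> 'k) set
    \<Rightarrow> ((nat list \<Rightarrow> nat list \<Rightarrow> 'k) \<Rightarrow> (nat list \<Rightarrow> nat list \<Rightarrow> 'k) \<Rightarrow> 'k) \<Rightarrow> bool" where
  "cotensor d n X C Y \<Phi> \<longleftrightarrow> bilin X Y \<Phi>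
     \<and> (\<forall>f\<in>X. \<forall>g\<in>C. \<forall>h\<in>Y. \<Phi> (mcomp d n f g) h = \<Phi> f (mcomp d n g h))"

end

theory Submission
  imports Defs "HOL-Library.Function_Algebras" "HOL.Vector_Spaces" begin

context begin

interpretation fv: vector_space "(\<lambda>c v w. c * v w) :: 'k::field \<Rightarrow> (nat list \<Rightarrow> 'k) \<Rightarrow> nat list \<Rightarrow> 'k"
  by unfold_locales (auto simp: plus_fun_def algebra_simps)

lemma finite_words: "finite (words d n)"
proof -
  have "words d n = {xs. set xs \<subseteq> {..<d} \<and> length xs = n}" by (auto simp: words_def)
  thus ?thesis using finite_lists_length_eq[of "{..<d}" n] by simp
qed

lemma words0: "words d 0 = {[]}" by (auto simp: words_def)

definition delt :: "nat list \<Rightarrow> nat list \<Rightarrow> 'k::zero_neq_one" where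
  "delt u = (\<lambda>x. if x = u then 1 else 0)"

lemma fun_sum_apply: "(\<Sum>x\<in>A. f x) w = (\<Sum>x\<in>A. f x w)"
  by (induction A rule: infinite_finite_induct) auto

lemma tspace_expand:
  assumes "v \<in> tspace d n"
  shows "v = (\<Sum>u\<in>words d n. (\<lambda>w. v u * (delt u w :: 'k::field)))"
proof
  fix w
  show "v w = (\<Sum>u\<in>words d n. (\<lambda>w. v u * delt u w)) w"
  proof (cases "w \<in> words d n")
    case True
    then show ?thesis by (simp add: fun_sum_apply delt_def finite_words if_distrib[of "\<lambda>x. _ * x"] sum.delta cong: if_cong)
  next
    case False
    then show ?thesis using assms by (auto simp add: fun_sum_apply delt_def tspace_def intro!: sum.neutral)
  qed
qed

lemma tspace_span: "tspace d n \<subseteq> fv.span (delt ` words d n :: (nat list \<Rightarrow> 'k::field) set)"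
proof
  fix v :: "nat list \<Rightarrow> 'k" assume "v \<in> tspace d n"
  hence "v = (\<Sum>u\<in>words d n. (\<lambda>w. v u * delt u w))" by (rule tspace_expand)
  also have "\<dots> \<in> fv.span (delt ` words d n)"
    by (intro fv.span_sum fv.span_scale fv.span_base) auto
  finally show "v \<in> fv.span (delt ` words d n)" .
qed

lemma dim_less:
  fixes U1 U :: "(nat list \<Rightarrow> 'k::field) set"
  assumes "fv.subspace U1" "fv.subspace U" "U1 \<subseteq> U" "U1 \<noteq> U" "U \<subseteq> tspace d n"
  shows "fv.dim U1 < fv.dim U"
proof -
  let ?E = "delt ` words d n :: (nat list \<Rightarrow> 'k) set"
  have fE: "finite ?E" by (simp add: finite_words)
  obtain B1 where B1: "B1 \<subseteq> U1" "fv.independent B1" "U1 \<subseteq> fv.span B1" "card B1 = fv.dim U1"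
    using fv.basis_exists by blast
  obtain B where B: "B \<subseteq> U" "fv.independent B" "U \<subseteq> fv.span B" "card B = fv.dim U"
    using fv.basis_exists by blast
  have fB: "finite B" using fv.independent_span_bound[OF fE B(2)] B(1) assms(5) tspace_span by blast
  obtain u where u: "u \<in> U" "u \<notin> U1" using assms(3,4) by blast
  have "fv.span B1 \<subseteq> U1" using B1(1) assms(1) by (simp add: fv.span_minimal)
  hence "u \<notin> fv.span B1" using u by blast
  hence ind: "fv.independent (insert u B1)" using B1(2) fv.independent_insertI by blast
  have sub: "insert u B1 \<subseteq> fv.span B" using B(3) u(1) B1(1) assms(3) by blast
  have "finite (insert u B1) \<and> card (insert u B1) \<le> card B"
    using fv.independent_span_bound[OF fB ind sub] .
  moreover have "u \<notin> B1" using u B1(1) by blast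
  ultimately show ?thesis using B1(4) B(4) by auto
qed


lemma lam_add: "(\<lambda>w. u w + v w) = u + v" by (simp add: plus_fun_def)
lemma lam_zero: "(\<lambda>w. 0) = 0" by (simp add: zero_fun_def)

lemma Rop_tspace: "Rop R d n i v \<in> tspace d n"
  by (simp add: Rop_def tspace_def)

lemma Rop_add: "Rop R d n i (u + v) = Rop R d n i u + Rop R d n i v"
  by (rule ext) (simp add: Rop_def distrib_left sum.distrib)

lemma Rop_scale: "Rop R d n i (\<lambda>w. c * v w) = (\<lambda>w. c * Rop R d n i v w)"
  by (rule ext) (simp add: Rop_def sum_distrib_left mult.left_commute)

lemma Rop_zero: "Rop R d n i 0 = 0"
  by (rule ext) (simp add: Rop_def)

lemma hsubmodD:
  assumes "hsubmod R d n U"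
  shows "U \<subseteq> tspace d n" "0 \<in> U" "\<And>u v. u \<in> U \<Longrightarrow> v \<in> U \<Longrightarrow> u + v \<in> U"
    "\<And>c u. u \<in> U \<Longrightarrow> (\<lambda>w. c * u w) \<in> U"
    "\<And>i u. Suc i < n \<Longrightarrow> u \<in> U \<Longrightarrow> Rop R d n i u \<in> U"
proof -
  have h: "U \<subseteq> tspace d n" "(\<lambda>w. 0) \<in> U" "\<forall>u\<in>U. \<forall>v\<in>U. (\<lambda>w. u w + v w) \<in> U"
    "\<forall>c. \<forall>u\<in>U. (\<lambda>w. c * u w) \<in> U" "\<forall>i. Suc i < n \<longrightarrow> (\<forall>u\<in>U. Rop R d n i u \<in> U)"
    using assms unfolding hsubmod_def by blast+
  show "U \<subseteq> tspace d n" by (rule h(1))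
  show "0 \<in> U" using h(2) by (simp add: lam_zero)
  show "\<And>u v. u \<in> U \<Longrightarrow> v \<in> U \<Longrightarrow> u + v \<in> U" using h(3)[rule_format] by (metis lam_add)
  show "\<And>c u. u \<in> U \<Longrightarrow> (\<lambda>w. c * u w) \<in> U" by (rule h(4)[rule_format])
  show "\<And>i u. Suc i < n \<Longrightarrow> u \<in> U \<Longrightarrow> Rop R d n i u \<in> U" by (rule h(5)[rule_format])
qed

lemma hsubmod_diff:
  assumes "hsubmod R d n U" "u \<in> U" "v \<in> U"
  shows "u - v \<in> U"
proof -
  have "(\<lambda>w. (-1) * v w) \<in> U" using hsubmodD(4)[OF assms(1) assms(3)] .
  moreover have "(\<lambda>w. (-1) * v w) = - v" by (rule ext) simp
  ultimately have "- v \<in> U" by simp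
  from hsubmodD(3)[OF assms(1) assms(2) this] show ?thesis by (simp only: diff_conv_add_uminus)
qed

lemma hsubmod_subspace: assumes "hsubmod R d n U" shows "fv.subspace U"
  by (simp add: fv.subspace_def hsubmodD[OF assms])

lemma hsubmod_zero: "hsubmod R d n {0}"
  unfolding hsubmod_def by (simp add: tspace_def Rop_zero lam_zero)

lemma hsubmod_tspace: "hsubmod R d n (tspace d n)"
  using Rop_tspace[of R d n] unfolding hsubmod_def tspace_def by simp

definition imap :: "(nat \<Rightarrow> nat \<Rightarrow> nat \<Rightarrow> nat \<Rightarrow> 'k::field) \<Rightarrow> nat \<Rightarrow> (nat \<Rightarrow> nat \<Rightarrow> nat \<Rightarrow> nat \<Rightarrow> 'k) \<Rightarrow> nat \<Rightarrow> nat
   \<Rightarrow> ((nat list \<Rightarrow> 'k) \<Rightarrow> nat list \<Rightarrow> 'k) \<Rightarrow> bool" where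
  "imap R1 d1 R2 d2 n f \<longleftrightarrow> (\<forall>v\<in>tspace d1 n. f v \<in> tspace d2 n)
     \<and> (\<forall>u\<in>tspace d1 n. \<forall>v\<in>tspace d1 n. f (u + v) = f u + f v)
     \<and> (\<forall>c. \<forall>v\<in>tspace d1 n. f (\<lambda>w. c * v w) = (\<lambda>w. c * f v w))
     \<and> (\<forall>i. Suc i < n \<longrightarrow> (\<forall>v\<in>tspace d1 n. f (Rop R1 d1 n i v) = Rop R2 d2 n i (f v)))"

definition proj :: "(nat list \<Rightarrow> 'k::field) set \<Rightarrow> (nat list \<Rightarrow> 'k) set \<Rightarrow> (nat list \<Rightarrow> 'k) \<Rightarrow> nat list \<Rightarrow> 'k" where
  "proj U U' v = (SOME u. u \<in> U \<and> (\<exists>u'\<in>U'. v = u + u'))"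

lemma proj_eq:
  assumes "hsubmod R d n U" "hsubmod R d n U'" "U \<inter> U' = {0}" "u \<in> U" "u' \<in> U'" "v = u + u'"
  shows "proj U U' v = u"
proof -
  have ex: "\<exists>x. x \<in> U \<and> (\<exists>u'\<in>U'. v = x + u')" using assms by blast
  obtain x x' where x: "x \<in> U" "x' \<in> U'" "v = x + x'" and px: "proj U U' v = x"
    using someI_ex[OF ex] unfolding proj_def by blast
  have "x - u = u' - x'" using x assms(6) by (simp add: algebra_simps)
  moreover have "x - u \<in> U" using hsubmod_diff[OF assms(1) x(1) assms(4)] .
  moreover have "u' - x' \<in> U'" using hsubmod_diff[OF assms(2) assms(5) x(2)] .
  ultimately have "x - u = 0" using assms(3) by (metis IntI singletonD)
  thus ?thesis using px by simp
qed

lemma proj_props: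
  fixes U U' :: "(nat list \<Rightarrow> 'k::field) set"
  assumes "hsubmod R d n U" "hsubmod R d n U'" "U \<inter> U' = {0}" "\<forall>v\<in>tspace d n. \<exists>u\<in>U. \<exists>u'\<in>U'. v = u + u'"
  shows "imap R d R d n (proj U U')" "\<And>v. v \<in> tspace d n \<Longrightarrow> proj U U' v \<in> U"
proof -
  note pe = proj_eq[OF assms(1-3)]
  note A = hsubmodD[OF assms(1)] and B = hsubmodD[OF assms(2)]
  show inU: "\<And>v. v \<in> tspace d n \<Longrightarrow> proj U U' v \<in> U"
  proof -
    fix v :: "nat list \<Rightarrow> 'k" assume "v \<in> tspace d n"
    then obtain a a' where ab: "a \<in> U" "a' \<in> U'" "v = a + a'" using assms(4) by blast
    show "proj U U' v \<in> U" using pe[OF ab] ab(1) by simp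
  qed
  show "imap R d R d n (proj U U')"
    unfolding imap_def
  proof (intro conjI ballI allI impI)
    fix v :: "nat list \<Rightarrow> 'k" assume "v \<in> tspace d n" thus "proj U U' v \<in> tspace d n" using inU A(1) by blast
  next
    fix u v :: "nat list \<Rightarrow> 'k" assume "u \<in> tspace d n" "v \<in> tspace d n"
    then obtain a a' b b' where ab: "a \<in> U" "a' \<in> U'" "u = a + a'" "b \<in> U" "b' \<in> U'" "v = b + b'"
      using assms(4) by blast
    have "proj U U' (u + v) = a + b"
      by (rule pe[of _ "a' + b'"]) (use ab A(3) B(3) in \<open>simp_all add: algebra_simps\<close>)
    thus "proj U U' (u + v) = proj U U' u + proj U U' v" using pe[OF ab(1-3)] pe[OF ab(4-6)] by simp
  next
    fix c :: 'k and v :: "nat list \<Rightarrow> 'k" assume "v \<in> tspace d n"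
    then obtain a a' where ab: "a \<in> U" "a' \<in> U'" "v = a + a'"
      using assms(4) by blast
    have "proj U U' (\<lambda>w. c * v w) = (\<lambda>w. c * a w)"
      by (rule pe[of _ "\<lambda>w. c * a' w"]) (use ab A(4) B(4) in \<open>simp_all add: algebra_simps plus_fun_def\<close>)
    thus "proj U U' (\<lambda>w. c * v w) = (\<lambda>w. c * proj U U' v w)" using pe[OF ab(1-3)] by simp
  next
    fix i and v :: "nat list \<Rightarrow> 'k" assume i: "Suc i < n" and "v \<in> tspace d n"
    then obtain a a' where ab: "a \<in> U" "a' \<in> U'" "v = a + a'"
      using assms(4) by blast
    have "proj U U' (Rop R d n i v) = Rop R d n i a"
      by (rule pe[of _ "Rop R d n i a'"]) (use ab A(5) B(5) i in \<open>simp_all add: Rop_add\<close>)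
    thus "proj U U' (Rop R d n i v) = Rop R d n i (proj U U' v)" using pe[OF ab(1-3)] by simp
  qed
qed


lemma imapD:
  assumes "imap R1 d1 R2 d2 n f"
  shows "\<And>v. v \<in> tspace d1 n \<Longrightarrow> f v \<in> tspace d2 n"
    "\<And>u v. u \<in> tspace d1 n \<Longrightarrow> v \<in> tspace d1 n \<Longrightarrow> f (u + v) = f u + f v"
    "\<And>c v. v \<in> tspace d1 n \<Longrightarrow> f (\<lambda>w. c * v w) = (\<lambda>w. c * f v w)"
    "\<And>i v. Suc i < n \<Longrightarrow> v \<in> tspace d1 n \<Longrightarrow> f (Rop R1 d1 n i v) = Rop R2 d2 n i (f v)"
  using assms unfolding imap_def by simp_all

lemma hsummand_iff: "hsummand R d n U \<longleftrightarrow> hsubmod R d n U \<and> (\<exists>U'. hsubmod R d n U' \<and> U \<inter> U' = {0}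
        \<and> (\<forall>v\<in>tspace d n. \<exists>u\<in>U. \<exists>u'\<in>U'. v = u + u'))"
  unfolding hsummand_def lam_zero plus_fun_def by (rule refl)

lemma hindec_iff: "hindec R d n U \<longleftrightarrow> U \<noteq> {0} \<and>
     \<not> (\<exists>U1 U2. hsubmod R d n U1 \<and> hsubmod R d n U2 \<and> U1 \<subseteq> U \<and> U2 \<subseteq> U
          \<and> U1 \<noteq> {0} \<and> U2 \<noteq> {0} \<and> U1 \<inter> U2 = {0}
          \<and> (\<forall>u\<in>U. \<exists>u1\<in>U1. \<exists>u2\<in>U2. u = u1 + u2))"
  unfolding hindec_def lam_zero plus_fun_def by (rule refl)

lemma hiso_iff: "hiso R1 d1 n U R2 d2 W \<longleftrightarrow> (\<exists>\<phi>. bij_betw \<phi> U W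
     \<and> (\<forall>u\<in>U. \<forall>v\<in>U. \<phi> (u + v) = \<phi> u + \<phi> v)
     \<and> (\<forall>c. \<forall>u\<in>U. \<phi> (\<lambda>w. c * u w) = (\<lambda>w. c * \<phi> u w))
     \<and> (\<forall>i. Suc i < n \<longrightarrow> (\<forall>u\<in>U. \<phi> (Rop R1 d1 n i u) = Rop R2 d2 n i (\<phi> u))))"
  unfolding hiso_def plus_fun_def by (rule refl)

lemma indec_case:
  fixes U U' :: "(nat list \<Rightarrow> 'k::field) set" and W W' :: "(nat list \<Rightarrow> 'k) set"
  assumes U: "hsubmod R' d' n U" "hsubmod R' d' n U'" "U \<inter> U' = {0}" "\<forall>v\<in>tspace d' n. \<exists>u\<in>U. \<exists>u'\<in>U'. v = u + u'"
    and W: "hsubmod R d n W" "hsubmod R d n W'" "W \<inter> W' = {0}" "\<forall>v\<in>tspace d n. \<exists>u\<in>W. \<exists>u'\<in>W'. v = u + u'"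
    and bij: "bij_betw \<phi> U W"
    and padd: "\<And>u v. u \<in> U \<Longrightarrow> v \<in> U \<Longrightarrow> \<phi> (u + v) = \<phi> u + \<phi> v"
    and pscale: "\<And>c u. u \<in> U \<Longrightarrow> \<phi> (\<lambda>w. c * u w) = (\<lambda>w. c * \<phi> u w)"
    and prp: "\<And>i u. Suc i < n \<Longrightarrow> u \<in> U \<Longrightarrow> \<phi> (Rop R' d' n i u) = Rop R d n i (\<phi> u)"
  shows "\<exists>\<alpha> \<beta>. imap R d R' d' n \<alpha> \<and> imap R' d' R d n \<beta> \<and> (\<forall>v\<in>tspace d' n. \<forall>u\<in>U. \<forall>u'\<in>U'. v = u + u' \<longrightarrow> u = \<alpha> (\<beta> v))"
proof -
  define g where "g = inv_into U \<phi>"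
  have g1: "g x \<in> U" "\<phi> (g x) = x" if "x \<in> W" for x
    using that bij unfolding g_def
    by (auto simp: bij_betw_def inv_into_into f_inv_into_f)
  have g2: "g (\<phi> u) = u" if "u \<in> U" for u
    using that bij unfolding g_def by (simp add: bij_betw_def inv_into_f_f)
  have pW: "\<phi> u \<in> W" if "u \<in> U" for u using that bij bij_betwE by blast
  note UU = hsubmodD[OF U(1)] and WW = hsubmodD[OF W(1)]
  note pU = proj_props[OF U] and pw = proj_props[OF W]
  note pUD = imapD[OF pU(1)] and pwD = imapD[OF pw(1)]
  define \<beta> where "\<beta> = (\<lambda>v. \<phi> (proj U U' v))"
  define \<alpha> where "\<alpha> = (\<lambda>x. g (proj W W' x))"
  have gadd: "g (x + y) = g x + g y" if "x \<in> W" "y \<in> W" for x y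
  proof -
    have "\<phi> (g x + g y) = x + y" using padd[OF g1(1)[OF that(1)] g1(1)[OF that(2)]] g1[OF that(1)] g1[OF that(2)] by simp
    hence "g (x + y) = g (\<phi> (g x + g y))" by simp
    also have "\<dots> = g x + g y" using g2 UU(3) g1(1) that by simp
    finally show ?thesis .
  qed
  have gscale: "g (\<lambda>w. c * x w) = (\<lambda>w. c * g x w)" if "x \<in> W" for x c
  proof -
    have "\<phi> (\<lambda>w. c * g x w) = (\<lambda>w. c * x w)" using pscale[OF g1(1)[OF that]] g1(2)[OF that] by simp
    hence "g (\<lambda>w. c * x w) = g (\<phi> (\<lambda>w. c * g x w))" by simp
    also have "\<dots> = (\<lambda>w. c * g x w)" using g2 UU(4) g1(1) that by simp
    finally show ?thesis .
  qed
  have grop: "g (Rop R d n i x) = Rop R' d' n i (g x)" if "x \<in> W" "Suc i < n" for x i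
  proof -
    have "Rop R d n i x = \<phi> (Rop R' d' n i (g x))" using prp[OF that(2) g1(1)[OF that(1)]] g1(2)[OF that(1)] by simp
    hence "g (Rop R d n i x) = g (\<phi> (Rop R' d' n i (g x)))" by simp
    also have "\<dots> = Rop R' d' n i (g x)" using g2 UU(5) g1(1) that by simp
    finally show ?thesis .
  qed
  have ib: "imap R' d' R d n \<beta>"
    unfolding imap_def
  proof (intro conjI ballI allI impI)
    fix v :: "nat list \<Rightarrow> 'k" assume "v \<in> tspace d' n"
    thus "\<beta> v \<in> tspace d n" unfolding \<beta>_def using pU(2) pW WW(1) by blast
  next
    fix u v :: "nat list \<Rightarrow> 'k" assume "u \<in> tspace d' n" "v \<in> tspace d' n"
    thus "\<beta> (u + v) = \<beta> u + \<beta> v" unfolding \<beta>_def using pUD(2) padd pU(2) by simp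
  next
    fix c :: 'k and v :: "nat list \<Rightarrow> 'k" assume "v \<in> tspace d' n"
    thus "\<beta> (\<lambda>w. c * v w) = (\<lambda>w. c * \<beta> v w)" unfolding \<beta>_def using pUD(3) pscale pU(2) by simp
  next
    fix i and v :: "nat list \<Rightarrow> 'k" assume "Suc i < n" "v \<in> tspace d' n"
    thus "\<beta> (Rop R' d' n i v) = Rop R d n i (\<beta> v)" unfolding \<beta>_def using pUD(4) prp pU(2) by simp
  qed
  have ia: "imap R d R' d' n \<alpha>"
    unfolding imap_def
  proof (intro conjI ballI allI impI)
    fix v :: "nat list \<Rightarrow> 'k" assume "v \<in> tspace d n"
    thus "\<alpha> v \<in> tspace d' n" unfolding \<alpha>_def using pw(2) g1(1) UU(1) by blast
  next
    fix u v :: "nat list \<Rightarrow> 'k" assume "u \<in> tspace d n" "v \<in> tspace d n"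
    thus "\<alpha> (u + v) = \<alpha> u + \<alpha> v" unfolding \<alpha>_def using pwD(2) gadd pw(2) by simp
  next
    fix c :: 'k and v :: "nat list \<Rightarrow> 'k" assume "v \<in> tspace d n"
    thus "\<alpha> (\<lambda>w. c * v w) = (\<lambda>w. c * \<alpha> v w)" unfolding \<alpha>_def using pwD(3) gscale pw(2) by simp
  next
    fix i and v :: "nat list \<Rightarrow> 'k" assume "Suc i < n" "v \<in> tspace d n"
    thus "\<alpha> (Rop R d n i v) = Rop R' d' n i (\<alpha> v)" unfolding \<alpha>_def using pwD(4) grop pw(2) by simp
  qed
  have "u = \<alpha> (\<beta> v)" if "v \<in> tspace d' n" "u \<in> U" "u' \<in> U'" "v = u + u'" for v u u'
  proof -
    have "proj U U' v = u" by (rule proj_eq[OF U(1-3) that(2-4)])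
    moreover have "proj W W' (\<phi> u) = \<phi> u"
      by (rule proj_eq[OF W(1-3) pW[OF that(2)] hsubmodD(2)[OF W(2)]]) simp
    ultimately show ?thesis unfolding \<alpha>_def \<beta>_def using g2[OF that(2)] by simp
  qed
  thus ?thesis using ia ib by blast
qed

lemma tspace_add: fixes u v :: "nat list \<Rightarrow> 'k::comm_monoid_add" shows "u \<in> tspace d n \<Longrightarrow> v \<in> tspace d n \<Longrightarrow> u + v \<in> tspace d n"
  by (simp add: tspace_def)

lemma split_compl:
  fixes A B U U' :: "(nat list \<Rightarrow> 'k::field) set"
  assumes A: "hsubmod R d n A" and B: "hsubmod R d n B" and U: "hsubmod R d n U" and U': "hsubmod R d n U'"
    and sub: "A \<subseteq> U" "B \<subseteq> U" and AB: "A \<inter> B = {0}" and UU': "U \<inter> U' = {0}"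
  shows "hsubmod R d n {x + y | x y. x \<in> B \<and> y \<in> U'}" "A \<inter> {x + y | x y. x \<in> B \<and> y \<in> U'} = {0}"
proof -
  note a = hsubmodD[OF A] and b = hsubmodD[OF B] and u' = hsubmodD[OF U']
  let ?C = "{x + y | x y. x \<in> B \<and> y \<in> U'}"
  show "hsubmod R d n ?C"
    unfolding hsubmod_def lam_zero
  proof (intro conjI ballI allI impI)
    show "?C \<subseteq> tspace d n" using b(1) u'(1) tspace_add by blast
    have "(0::nat list \<Rightarrow> 'k) = 0 + 0" by simp
    thus "0 \<in> ?C" using b(2) u'(2) by blast
  next
    fix x y assume "x \<in> ?C" "y \<in> ?C"
    then obtain x1 x2 y1 y2 where xy: "x1 \<in> B" "x2 \<in> U'" "x = x1 + x2" "y1 \<in> B" "y2 \<in> U'" "y = y1 + y2" by blast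
    have "x + y = (x1 + y1) + (x2 + y2)" using xy by (simp add: algebra_simps)
    moreover have "x1 + y1 \<in> B" "x2 + y2 \<in> U'" using xy b(3) u'(3) by auto
    ultimately have "x + y \<in> ?C" by blast
    thus "(\<lambda>w. x w + y w) \<in> ?C" by (simp add: plus_fun_def)
  next
    fix c :: 'k and x assume "x \<in> ?C"
    then obtain x1 x2 where xy: "x1 \<in> B" "x2 \<in> U'" "x = x1 + x2" by blast
    have "(\<lambda>w. c * x w) = (\<lambda>w. c * x1 w) + (\<lambda>w. c * x2 w)" using xy by (simp add: plus_fun_def algebra_simps)
    moreover have "(\<lambda>w. c * x1 w) \<in> B" "(\<lambda>w. c * x2 w) \<in> U'" using xy b(4) u'(4) by auto
    ultimately show "(\<lambda>w. c * x w) \<in> ?C" by blast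
  next
    fix i x assume i: "Suc i < n" and "x \<in> ?C"
    then obtain x1 x2 where xy: "x1 \<in> B" "x2 \<in> U'" "x = x1 + x2" by blast
    have "Rop R d n i x = Rop R d n i x1 + Rop R d n i x2" using xy by (simp add: Rop_add)
    moreover have "Rop R d n i x1 \<in> B" "Rop R d n i x2 \<in> U'" using xy b(5) u'(5) i by auto
    ultimately show "Rop R d n i x \<in> ?C" by blast
  qed
  show "A \<inter> ?C = {0}"
  proof
    have "(0::nat list \<Rightarrow> 'k) = 0 + 0" by simp
    thus "{0} \<subseteq> A \<inter> ?C" using a(2) b(2) u'(2) by blast
    show "A \<inter> ?C \<subseteq> {0}"
    proof
      fix z assume "z \<in> A \<inter> ?C"
      then obtain x y where z: "z \<in> A" "x \<in> B" "y \<in> U'" "z = x + y" by blast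
      have "z - x \<in> U" using hsubmod_diff[OF U] z sub by blast
      moreover have "z - x = y" using z by simp
      ultimately have "y = 0" using UU' z(3) by blast
      hence "z = x" using z by simp
      hence "z \<in> A \<inter> B" using z by simp
      thus "z \<in> {0}" using AB by simp
    qed
  qed
qed

lemma KI:
  fixes R R' :: "nat \<Rightarrow> nat \<Rightarrow> nat \<Rightarrow> nat \<Rightarrow> 'k::field"
  assumes hyp: "\<forall>U. hsummand R' d' n U \<and> hindec R' d' n U \<longrightarrow> (\<exists>W. hsummand R d n W \<and> hiso R' d' n U R d W)"
  shows "hsubmod R' d' n U \<Longrightarrow> hsubmod R' d' n U' \<Longrightarrow> U \<inter> U' = {0} \<Longrightarrow> \<forall>v\<in>tspace d' n. \<exists>u\<in>U. \<exists>u'\<in>U'. v = u + u' \<Longrightarrow>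
   \<exists>ps. (\<forall>p\<in>set ps. imap R d R' d' n (fst p) \<and> imap R' d' R d n (snd p)) \<and>
        (\<forall>v\<in>tspace d' n. \<forall>u\<in>U. \<forall>u'\<in>U'. v = u + u' \<longrightarrow> u = sum_list (map (\<lambda>p. fst p (snd p v)) ps))"
proof (induction "fv.dim U" arbitrary: U U' rule: less_induct)
  case less
  note U = less.prems
  show ?case
  proof (cases "hindec R' d' n U")
    case True
    have "hsummand R' d' n U" unfolding hsummand_iff using U by blast
    then obtain W where W: "hsummand R d n W" "hiso R' d' n U R d W" using hyp True by blast
    obtain W' where W': "hsubmod R d n W" "hsubmod R d n W'" "W \<inter> W' = {0}" "\<forall>v\<in>tspace d n. \<exists>u\<in>W. \<exists>u'\<in>W'. v = u + u'"
      using W(1) unfolding hsummand_iff by blast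
    from W(2)[unfolded hiso_iff] obtain \<phi> where \<phi>: "bij_betw \<phi> U W
     \<and> (\<forall>u\<in>U. \<forall>v\<in>U. \<phi> (u + v) = \<phi> u + \<phi> v)
     \<and> (\<forall>c. \<forall>u\<in>U. \<phi> (\<lambda>w. c * u w) = (\<lambda>w. c * \<phi> u w))
     \<and> (\<forall>i. Suc i < n \<longrightarrow> (\<forall>u\<in>U. \<phi> (Rop R' d' n i u) = Rop R d n i (\<phi> u)))" ..
    have p1: "bij_betw \<phi> U W" using \<phi> by (rule conjunct1)
    have p2: "\<forall>u\<in>U. \<forall>v\<in>U. \<phi> (u + v) = \<phi> u + \<phi> v" using \<phi> by simp
    have p3: "\<forall>c. \<forall>u\<in>U. \<phi> (\<lambda>w. c * u w) = (\<lambda>w. c * \<phi> u w)" using conjunct1[OF conjunct2[OF conjunct2[OF \<phi>]]] .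
    have p4: "\<forall>i. Suc i < n \<longrightarrow> (\<forall>u\<in>U. \<phi> (Rop R' d' n i u) = Rop R d n i (\<phi> u))" using conjunct2[OF conjunct2[OF conjunct2[OF \<phi>]]] .
    obtain \<alpha> \<beta> where ab: "imap R d R' d' n \<alpha>" "imap R' d' R d n \<beta>"
       "\<forall>v\<in>tspace d' n. \<forall>u\<in>U. \<forall>u'\<in>U'. v = u + u' \<longrightarrow> u = \<alpha> (\<beta> v)"
      using indec_case[OF U W' p1 p2[rule_format] p3[rule_format] p4[rule_format]] by blast
    show ?thesis
      by (rule exI[of _ "[(\<alpha>, \<beta>)]"]) (use ab in simp)
  next
    case False
    hence "U = {0} \<or> (\<exists>U1 U2. hsubmod R' d' n U1 \<and> hsubmod R' d' n U2 \<and> U1 \<subseteq> U \<and> U2 \<subseteq> U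
          \<and> U1 \<noteq> {0} \<and> U2 \<noteq> {0} \<and> U1 \<inter> U2 = {0}
          \<and> (\<forall>u\<in>U. \<exists>u1\<in>U1. \<exists>u2\<in>U2. u = u1 + u2))" unfolding hindec_iff by blast
    thus ?thesis
    proof
      assume "U = {0}"
      thus ?thesis by (intro exI[of _ "[]"]) simp
    next
      assume "\<exists>U1 U2. hsubmod R' d' n U1 \<and> hsubmod R' d' n U2 \<and> U1 \<subseteq> U \<and> U2 \<subseteq> U
          \<and> U1 \<noteq> {0} \<and> U2 \<noteq> {0} \<and> U1 \<inter> U2 = {0}
          \<and> (\<forall>u\<in>U. \<exists>u1\<in>U1. \<exists>u2\<in>U2. u = u1 + u2)"
      then obtain U1 U2 where D: "hsubmod R' d' n U1" "hsubmod R' d' n U2" "U1 \<subseteq> U" "U2 \<subseteq> U"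
          "U1 \<noteq> {0}" "U2 \<noteq> {0}" "U1 \<inter> U2 = {0}" "\<forall>u\<in>U. \<exists>u1\<in>U1. \<exists>u2\<in>U2. u = u1 + u2" by blast
      define C1 where "C1 = {x + y | x y. x \<in> U2 \<and> y \<in> U'}"
      define C2 where "C2 = {x + y | x y. x \<in> U1 \<and> y \<in> U'}"
      have D21: "U2 \<inter> U1 = {0}" using D(7) by blast
      note s1 = split_compl[OF D(1) D(2) U(1) U(2) D(3) D(4) D(7) U(3), folded C1_def]
      note s2 = split_compl[OF D(2) D(1) U(1) U(2) D(4) D(3) D21 U(3), folded C2_def]
      have dec1: "v = u1 + (u2 + u')" "v = u2 + (u1 + u')" if "v = u + u'" "u = u1 + u2" for v u u' u1 u2 :: "nat list \<Rightarrow> 'k"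
        using that by (simp_all add: algebra_simps)
      have sp1: "\<forall>v\<in>tspace d' n. \<exists>u\<in>U1. \<exists>u'\<in>C1. v = u + u'"
      proof
        fix v :: "nat list \<Rightarrow> 'k" assume "v \<in> tspace d' n"
        then obtain u u' where "u \<in> U" "u' \<in> U'" "v = u + u'" using U(4) by blast
        moreover then obtain u1 u2 where "u1 \<in> U1" "u2 \<in> U2" "u = u1 + u2" using D(8) by blast
        ultimately show "\<exists>u\<in>U1. \<exists>u'\<in>C1. v = u + u'" unfolding C1_def using dec1(1) by blast
      qed
      have sp2: "\<forall>v\<in>tspace d' n. \<exists>u\<in>U2. \<exists>u'\<in>C2. v = u + u'"
      proof
        fix v :: "nat list \<Rightarrow> 'k" assume "v \<in> tspace d' n"
        then obtain u u' where "u \<in> U" "u' \<in> U'" "v = u + u'" using U(4) by blast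
        moreover then obtain u1 u2 where "u1 \<in> U1" "u2 \<in> U2" "u = u1 + u2" using D(8) by blast
        ultimately show "\<exists>u\<in>U2. \<exists>u'\<in>C2. v = u + u'" unfolding C2_def using dec1(2) by blast
      qed
      have Ut: "U \<subseteq> tspace d' n" using hsubmodD(1)[OF U(1)] .
      have "U1 \<noteq> U"
      proof
        assume "U1 = U"
        hence "U2 \<subseteq> U1 \<inter> U2" using D(4) by blast
        thus False using D(6) D(7) hsubmodD(2)[OF D(2)] by blast
      qed
      hence dim1: "fv.dim U1 < fv.dim U"
        using dim_less[OF hsubmod_subspace[OF D(1)] hsubmod_subspace[OF U(1)] D(3) _ Ut] by blast
      have "U2 \<noteq> U"
      proof
        assume "U2 = U"
        hence "U1 \<subseteq> U1 \<inter> U2" using D(3) by blast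
        thus False using D(5) D(7) hsubmodD(2)[OF D(1)] by blast
      qed
      hence dim2: "fv.dim U2 < fv.dim U"
        using dim_less[OF hsubmod_subspace[OF D(2)] hsubmod_subspace[OF U(1)] D(4) _ Ut] by blast
      obtain ps1 where ps1: "\<forall>p\<in>set ps1. imap R d R' d' n (fst p) \<and> imap R' d' R d n (snd p)"
        "\<forall>v\<in>tspace d' n. \<forall>u\<in>U1. \<forall>u'\<in>C1. v = u + u' \<longrightarrow> u = sum_list (map (\<lambda>p. fst p (snd p v)) ps1)"
        using less.hyps[OF dim1 D(1) s1(1) s1(2) sp1] by blast
      obtain ps2 where ps2: "\<forall>p\<in>set ps2. imap R d R' d' n (fst p) \<and> imap R' d' R d n (snd p)"
        "\<forall>v\<in>tspace d' n. \<forall>u\<in>U2. \<forall>u'\<in>C2. v = u + u' \<longrightarrow> u = sum_list (map (\<lambda>p. fst p (snd p v)) ps2)"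
        using less.hyps[OF dim2 D(2) s2(1) s2(2) sp2] by blast
      show ?thesis
      proof (rule exI[of _ "ps1 @ ps2"], rule conjI)
        show "\<forall>p\<in>set (ps1 @ ps2). imap R d R' d' n (fst p) \<and> imap R' d' R d n (snd p)" using ps1(1) ps2(1) by auto
      next
        show "\<forall>v\<in>tspace d' n. \<forall>u\<in>U. \<forall>u'\<in>U'. v = u + u' \<longrightarrow> u = sum_list (map (\<lambda>p. fst p (snd p v)) (ps1 @ ps2))"
        proof (intro ballI impI)
        fix v u u' :: "nat list \<Rightarrow> 'k" assume v: "v \<in> tspace d' n" "u \<in> U" "u' \<in> U'" "v = u + u'"
        then obtain u1 u2 where uu: "u1 \<in> U1" "u2 \<in> U2" "u = u1 + u2" using D(8) by blast
        have "u2 + u' \<in> C1" "u1 + u' \<in> C2" unfolding C1_def C2_def using uu v by blast+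
        hence "u1 = sum_list (map (\<lambda>p. fst p (snd p v)) ps1)" "u2 = sum_list (map (\<lambda>p. fst p (snd p v)) ps2)"
          using ps1(2) ps2(2) v(1) uu dec1[OF v(4) uu(3)] by blast+
        thus "u = sum_list (map (\<lambda>p. fst p (snd p v)) (ps1 @ ps2))" using uu(3) by simp
      qed
      qed
    qed
  qed
qed

lemma sum_list_fun_apply: "sum_list xs x = sum_list (map (\<lambda>f. f x) xs)"
  by (induction xs) auto

definition mat :: "nat \<Rightarrow> nat \<Rightarrow> nat \<Rightarrow> ((nat list \<Rightarrow> 'k::field) \<Rightarrow> nat list \<Rightarrow> 'k) \<Rightarrow> nat list \<Rightarrow> nat list \<Rightarrow> 'k" where
  "mat d1 d2 n f = (\<lambda>w u. if w \<in> words d2 n \<and> u \<in> words d1 n then f (delt u) w else 0)"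

definition idm :: "nat \<Rightarrow> nat \<Rightarrow> nat list \<Rightarrow> nat list \<Rightarrow> 'k::field" where
  "idm d n = (\<lambda>w u. if w = u \<and> u \<in> words d n then 1 else 0)"

lemma delt_tspace: "u \<in> words d n \<Longrightarrow> delt u \<in> tspace d n"
  by (auto simp: delt_def tspace_def)

lemma tspace_zero: "0 \<in> tspace d n" by (simp add: tspace_def)

lemma tspace_sum: fixes g :: "'a \<Rightarrow> nat list \<Rightarrow> 'k::comm_monoid_add"
  shows "(\<And>x. x \<in> S \<Longrightarrow> g x \<in> tspace d n) \<Longrightarrow> (\<Sum>x\<in>S. g x) \<in> tspace d n"
  by (induction S rule: infinite_finite_induct) (auto simp: tspace_zero tspace_add)

lemma tspace_scale: fixes v :: "nat list \<Rightarrow> 'k::field" shows "v \<in> tspace d n \<Longrightarrow> (\<lambda>w. c * v w) \<in> tspace d n"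
  by (simp add: tspace_def)

lemma imap_zero: assumes "imap R1 d1 R2 d2 n f" shows "f 0 = 0"
proof -
  have "f (\<lambda>w. 0 * (0::nat list \<Rightarrow> 'a) w) = (\<lambda>w. 0 * f 0 w)" using imapD(3)[OF assms tspace_zero] .
  thus ?thesis by (simp add: zero_fun_def)
qed

lemma imap_sum:
  assumes f: "imap R1 d1 R2 d2 n f" and fin: "finite S"
  shows "(\<And>x. x \<in> S \<Longrightarrow> g x \<in> tspace d1 n) \<Longrightarrow> f (\<Sum>x\<in>S. g x) = (\<Sum>x\<in>S. f (g x))"
  using fin
proof (induction S rule: finite_induct)
  case empty
  then show ?case using imap_zero[OF f] by (simp add: zero_fun_def)
next
  case (insert x F)
  have "f (\<Sum>x\<in>insert x F. g x) = f (g x + (\<Sum>x\<in>F. g x))" using insert by simp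
  also have "\<dots> = f (g x) + f (\<Sum>x\<in>F. g x)"
    by (rule imapD(2)[OF f]) (use insert in \<open>auto intro!: tspace_sum\<close>)
  also have "\<dots> = f (g x) + (\<Sum>x\<in>F. f (g x))" using insert.IH[OF insert.prems[OF insertI2]] by (simp only:)
  also have "\<dots> = (\<Sum>x\<in>insert x F. f (g x))" using insert(1,2) by (rule sum.insert[symmetric])
  finally show ?case .
qed

lemma mapply_mat:
  assumes f: "imap R1 d1 R2 d2 n f" and v: "v \<in> tspace d1 n"
  shows "mapply d1 n (mat d1 d2 n f) v = f v"
proof -
  have "f v = f (\<Sum>u\<in>words d1 n. (\<lambda>w. v u * delt u w))" using tspace_expand[OF v] by simp
  also have "\<dots> = (\<Sum>u\<in>words d1 n. f (\<lambda>w. v u * delt u w))"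
    by (rule imap_sum[OF f finite_words]) (simp add: tspace_scale delt_tspace)
  also have "\<dots> = (\<Sum>u\<in>words d1 n. (\<lambda>w. v u * f (delt u) w))"
    by (rule sum.cong[OF refl]) (simp add: imapD(3)[OF f] delt_tspace)
  finally have fv: "f v = (\<Sum>u\<in>words d1 n. (\<lambda>w. v u * f (delt u) w))" .
  show ?thesis
  proof
    fix w
    show "mapply d1 n (mat d1 d2 n f) v w = f v w"
    proof (cases "w \<in> words d2 n")
      case True
      then show ?thesis unfolding fv mapply_def mat_def fun_sum_apply
        by (intro sum.cong refl) (simp add: mult.commute)
    next
      case False
      have "f v w = 0" using imapD(1)[OF f v] False by (simp add: tspace_def)
      then show ?thesis using False by (simp add: mapply_def mat_def)
    qed
  qed
qed

lemma mapply_tspace: "mapply d n M v \<in> tspace d' n" if "\<forall>w u. w \<notin> words d' n \<longrightarrow> M w u = 0"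
  using that by (simp add: mapply_def tspace_def)

lemma mat_HomH:
  fixes R1 :: "nat \<Rightarrow> nat \<Rightarrow> nat \<Rightarrow> nat \<Rightarrow> 'k::field"
  assumes f: "imap R1 d1 R2 d2 n f"
  shows "mat d1 d2 n f \<in> HomH R1 d1 R2 d2 n"
  unfolding HomH_def
proof (intro CollectI conjI allI impI ballI)
  fix w u assume "w \<notin> words d2 n \<or> u \<notin> words d1 n"
  thus "mat d1 d2 n f w u = 0" by (auto simp: mat_def)
next
  fix i and v :: "nat list \<Rightarrow> 'k" assume i: "Suc i < n" and v: "v \<in> tspace d1 n"
  show "mapply d1 n (mat d1 d2 n f) (Rop R1 d1 n i v) = Rop R2 d2 n i (mapply d1 n (mat d1 d2 n f) v)"
    using mapply_mat[OF f v] mapply_mat[OF f Rop_tspace] imapD(4)[OF f i v] by simp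
qed

lemma mcomp_mat:
  assumes a: "imap R d R' d' n \<alpha>" and b: "imap R' d' R d n \<beta>"
  shows "mcomp d n (mat d d' n \<alpha>) (mat d' d n \<beta>) w u = (if w \<in> words d' n \<and> u \<in> words d' n then \<alpha> (\<beta> (delt u)) w else 0)"
proof (cases "w \<in> words d' n \<and> u \<in> words d' n")
  case True
  have bt: "\<beta> (delt u) \<in> tspace d n" using imapD(1)[OF b delt_tspace] True by blast
  have "mcomp d n (mat d d' n \<alpha>) (mat d' d n \<beta>) w u = mapply d n (mat d d' n \<alpha>) (\<beta> (delt u)) w"
    unfolding mcomp_def mapply_def by (intro sum.cong refl) (use True in \<open>simp add: mat_def\<close>)
  also have "\<dots> = \<alpha> (\<beta> (delt u)) w" using mapply_mat[OF a bt] by simp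
  finally show ?thesis using True by simp
next
  case False
  then show ?thesis by (auto simp: mcomp_def mat_def)
qed

definition factors :: "(nat \<Rightarrow> nat \<Rightarrow> nat \<Rightarrow> nat \<Rightarrow> 'k::field) \<Rightarrow> nat \<Rightarrow> (nat \<Rightarrow> nat \<Rightarrow> nat \<Rightarrow> nat \<Rightarrow> 'k) \<Rightarrow> nat \<Rightarrow> nat \<Rightarrow> bool" where
  "factors R d R' d' n \<longleftrightarrow> (\<exists>ps. (\<forall>p\<in>set ps. fst p \<in> HomH R d R' d' n \<and> snd p \<in> HomH R' d' R d n)
      \<and> sum_list (map (\<lambda>p. mcomp d n (fst p) (snd p)) ps) = idm d' n)"

lemma factors_hyp:
  fixes R R' :: "nat \<Rightarrow> nat \<Rightarrow> nat \<Rightarrow> nat \<Rightarrow> 'k::field"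
  assumes hyp: "\<forall>U. hsummand R' d' n U \<and> hindec R' d' n U \<longrightarrow> (\<exists>W. hsummand R d n W \<and> hiso R' d' n U R d W)"
  shows "factors R d R' d' n"
proof -
  have int: "tspace d' n \<inter> {0} = {0::nat list \<Rightarrow> 'k}" using tspace_zero by blast
  have dec: "\<forall>v\<in>tspace d' n. \<exists>u\<in>tspace d' n. \<exists>u'\<in>{0}. v = u + (u'::nat list \<Rightarrow> 'k)"
  proof
    fix v :: "nat list \<Rightarrow> 'k" assume "v \<in> tspace d' n"
    moreover have "v = v + 0" by simp
    ultimately show "\<exists>u\<in>tspace d' n. \<exists>u'\<in>{0}. v = u + u'" by blast
  qed
  obtain ps0 where ps0: "\<forall>p\<in>set ps0. imap R d R' d' n (fst p) \<and> imap R' d' R d n (snd p)"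
    "\<forall>v\<in>tspace d' n. \<forall>u\<in>tspace d' n. \<forall>u'\<in>{0}. v = u + u' \<longrightarrow> u = sum_list (map (\<lambda>p. fst p (snd p v)) ps0)"
    using KI[OF hyp hsubmod_tspace hsubmod_zero int dec] by blast
  have idv: "v = sum_list (map (\<lambda>p. fst p (snd p v)) ps0)" if "v \<in> tspace d' n" for v
    using ps0(2) that by simp
  define ps where "ps = map (\<lambda>p. (mat d d' n (fst p), mat d' d n (snd p))) ps0"
  have "sum_list (map (\<lambda>p. mcomp d n (fst p) (snd p)) ps) = idm d' n"
  proof (intro ext)
    fix w u
    have "sum_list (map (\<lambda>p. mcomp d n (fst p) (snd p)) ps) w u
        = sum_list (map (\<lambda>p. mcomp d n (mat d d' n (fst p)) (mat d' d n (snd p)) w u) ps0)"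
      unfolding ps_def sum_list_fun_apply[of _ w] by (simp add: sum_list_fun_apply[of _ u] o_def)
    also have "\<dots> = sum_list (map (\<lambda>p. if w \<in> words d' n \<and> u \<in> words d' n then fst p (snd p (delt u)) w else 0) ps0)"
      by (intro arg_cong[where f=sum_list] map_cong refl) (use ps0(1) mcomp_mat in blast)
    also have "\<dots> = idm d' n w u"
    proof (cases "w \<in> words d' n \<and> u \<in> words d' n")
      case True
      have "sum_list (map (\<lambda>p. fst p (snd p (delt u)) w) ps0) = sum_list (map (\<lambda>p. fst p (snd p (delt u))) ps0) w"
        by (simp add: sum_list_fun_apply[of _ w] o_def)
      also have "\<dots> = delt u w" using idv[OF delt_tspace[of u d' n]] True by simp
      finally show ?thesis using True by (simp add: idm_def delt_def)
    next
      case False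
      hence "\<not> (w = u \<and> u \<in> words d' n)" by blast
      hence "idm d' n w u = 0" by (simp add: idm_def)
      moreover have "map (\<lambda>p. if w \<in> words d' n \<and> u \<in> words d' n then fst p (snd p (delt u)) w else 0) ps0 = map (\<lambda>p. 0) ps0"
        using False by (intro map_cong refl) (simp only: if_False)
      moreover have "sum_list (map (\<lambda>p. (0::'k)) ps0) = 0" by (induction ps0) auto
      ultimately show ?thesis by (metis (no_types))
    qed
    finally show "sum_list (map (\<lambda>p. mcomp d n (fst p) (snd p)) ps) w u = idm d' n w u" .
  qed
  moreover have "\<forall>p\<in>set ps. fst p \<in> HomH R d R' d' n \<and> snd p \<in> HomH R' d' R d n"
    unfolding ps_def
  proof
    fix p assume "p \<in> set (map (\<lambda>p. (mat d d' n (fst p), mat d' d n (snd p))) ps0)"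
    then obtain q where q: "q \<in> set ps0" "p = (mat d d' n (fst q), mat d' d n (snd q))" by auto
    show "fst p \<in> HomH R d R' d' n \<and> snd p \<in> HomH R' d' R d n"
      using q ps0(1) mat_HomH[of R d R' d' n "fst q"] mat_HomH[of R' d' R d n "snd q"] by simp
  qed
  ultimately show ?thesis unfolding factors_def by blast
qed

end

lemma HomH_small: "n \<le> 1 \<Longrightarrow> M \<in> HomH R1 d1 R2 d2 n \<longleftrightarrow> (\<forall>w u. w \<notin> words d2 n \<or> u \<notin> words d1 n \<longrightarrow> M w u = 0)"
  by (simp add: HomH_def)

definition emat :: "nat list \<Rightarrow> nat list \<Rightarrow> nat list \<Rightarrow> nat list \<Rightarrow> 'k::field" where
  "emat a b = (\<lambda>w u. if w = a \<and> u = b then 1 else 0)"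

lemma factors_small:
  fixes R R' :: "nat \<Rightarrow> nat \<Rightarrow> nat \<Rightarrow> nat \<Rightarrow> 'k::field"
  assumes n: "n \<le> 1" and x0: "x0 \<in> words d n"
  shows "factors R d R' d' n"
proof -
  obtain ws where ws: "set ws = words d' n" "distinct ws" using finite_distinct_list[OF finite_words] by blast
  define ps where "ps = map (\<lambda>a. (emat a x0 :: nat list \<Rightarrow> nat list \<Rightarrow> 'k, emat x0 a :: nat list \<Rightarrow> nat list \<Rightarrow> 'k)) ws"
  have "\<forall>p\<in>set ps. fst p \<in> HomH R d R' d' n \<and> snd p \<in> HomH R' d' R d n"
    unfolding ps_def using ws(1) x0 by (auto simp: HomH_small[OF n] emat_def)
  moreover have "sum_list (map (\<lambda>p. mcomp d n (fst p) (snd p)) ps) = idm d' n"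
  proof (intro ext)
    fix w u
    have mc: "mcomp d n (emat a x0) (emat x0 a) w u = (if w = a \<and> u = a then 1 else 0)" for a
      unfolding mcomp_def emat_def using x0 finite_words[of d n]
      by (simp add: if_distrib[of "\<lambda>x. x * _"] sum.delta cong: if_cong)
    have "sum_list (map (\<lambda>p. mcomp d n (fst p) (snd p)) ps) w u
        = sum_list (map (\<lambda>a. if w = a \<and> u = a then 1 else 0) ws)"
      unfolding ps_def sum_list_fun_apply[of _ w] by (simp add: sum_list_fun_apply[of _ u] o_def mc)
    also have "\<dots> = (\<Sum>a\<in>words d' n. if w = a \<and> u = a then 1 else 0)"
      using ws by (simp add: sum_list_distinct_conv_sum_set)
    also have "\<dots> = idm d' n w u"
    proof (cases "w = u \<and> u \<in> words d' n")
      case True thus ?thesis by (simp add: idm_def finite_words)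
    next
      case False thus ?thesis by (auto simp: idm_def intro!: sum.neutral)
    qed
    finally show "sum_list (map (\<lambda>p. mcomp d n (fst p) (snd p)) ps) w u = idm d' n w u" .
  qed
  ultimately show ?thesis unfolding factors_def by blast
qed

lemma words_empty: "words 0 (Suc n) = {}"
  by (auto simp: words_def)

lemma factors_all:
  fixes R R' :: "nat \<Rightarrow> nat \<Rightarrow> nat \<Rightarrow> nat \<Rightarrow> 'k::field"
  assumes hyp: "\<forall>n>1. \<forall>U. hsummand R' d' n U \<and> hindec R' d' n U
            \<longrightarrow> (\<exists>W. hsummand R d n W \<and> hiso R' d' n U R d W)"
  shows "factors R d R' d' n"
proof -
  consider "n = 0" | "n = 1" | "n > 1" by linarith
  thus ?thesis
  proof cases
    case 1
    show ?thesis by (rule factors_small) (auto simp: 1 words0)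
  next
    case 2
    show ?thesis
    proof (cases "d > 0")
      case True
      show ?thesis by (rule factors_small[of _ "[0]"]) (use 2 True in \<open>auto simp: words_def\<close>)
    next
      case False
      hence d0: "d = 0" by simp
      show ?thesis
      proof (cases "d' = 0")
        case True
        have "idm d' n = (0 :: nat list \<Rightarrow> nat list \<Rightarrow> 'k)"
          by (intro ext) (auto simp: idm_def True 2 words_empty)
        thus ?thesis unfolding factors_def by (intro exI[of _ "[]"]) simp
      next
        case False
        have "\<forall>U. hsummand R' d' 2 U \<and> hindec R' d' 2 U \<longrightarrow> (\<exists>W. hsummand R d 2 W \<and> hiso R' d' 2 U R d W)"
          using hyp by (erule_tac x=2 in allE) simp
        hence "factors R d R' d' 2" by (rule factors_hyp)
        then obtain ps where ps: "sum_list (map (\<lambda>p. mcomp d 2 (fst p) (snd p)) ps) = (idm d' 2 :: nat list \<Rightarrow> nat list \<Rightarrow> 'k)"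
          unfolding factors_def by blast
        have "\<And>A B :: nat list \<Rightarrow> nat list \<Rightarrow> 'k. mcomp d 2 A B = 0"
          using words_empty[of 1] by (intro ext) (simp add: mcomp_def d0 numeral_2_eq_2)
        hence "sum_list (map (\<lambda>p. mcomp d 2 (fst p) (snd p)) ps) = (0 :: nat list \<Rightarrow> nat list \<Rightarrow> 'k)"
          by (induction ps) auto
        hence "idm d' 2 [0,0] [0,0] = (0::'k)" using ps by simp
        moreover have "[0,0] \<in> words d' 2" using False by (simp add: words_def)
        ultimately have False by (simp add: idm_def)
        thus ?thesis ..
      qed
    qed
  next
    case 3
    show ?thesis by (rule factors_hyp) (use hyp 3 in blast)
  qed
qed

lemma mcomp_assoc: "mcomp d1 n (mcomp d2 n A B) C = mcomp d2 n A (mcomp d1 n B C)"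
  unfolding mcomp_def
  by (intro ext) (simp add: sum_distrib_left sum_distrib_right mult.assoc sum.swap[of _ "words d1 n"])

lemma mapply_mcomp: "mapply d0 n (mcomp d1 n f g) v = mapply d1 n f (mapply d0 n g v)"
  unfolding mcomp_def mapply_def
  by (intro ext) (simp add: sum_distrib_left sum_distrib_right mult.assoc sum.swap[of _ "words d0 n"])

lemma HomH_supp: "f \<in> HomH R1 d1 R2 d2 n \<Longrightarrow> w \<notin> words d2 n \<or> u \<notin> words d1 n \<Longrightarrow> f w u = 0"
  by (simp add: HomH_def)

lemma HomH_comm: "f \<in> HomH R1 d1 R2 d2 n \<Longrightarrow> Suc i < n \<Longrightarrow> v \<in> tspace d1 n \<Longrightarrow>
   mapply d1 n f (Rop R1 d1 n i v) = Rop R2 d2 n i (mapply d1 n f v)"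
  by (simp add: HomH_def)

lemma HomH_mapply_tspace: "f \<in> HomH R1 d1 R2 d2 n \<Longrightarrow> mapply d1 n f v \<in> tspace d2 n"
  by (rule mapply_tspace) (simp add: HomH_def)

lemma mcomp_HomH:
  fixes R0 :: "nat \<Rightarrow> nat \<Rightarrow> nat \<Rightarrow> nat \<Rightarrow> 'k::field"
  assumes f: "f \<in> HomH R1 d1 R2 d2 n" and g: "g \<in> HomH R0 d0 R1 d1 n"
  shows "mcomp d1 n f g \<in> HomH R0 d0 R2 d2 n"
  unfolding HomH_def
proof (intro CollectI conjI allI impI ballI)
  fix w u assume "w \<notin> words d2 n \<or> u \<notin> words d0 n"
  thus "mcomp d1 n f g w u = 0" using HomH_supp[OF f] HomH_supp[OF g] by (auto simp: mcomp_def)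
next
  fix i and v :: "nat list \<Rightarrow> 'k" assume i: "Suc i < n" and v: "v \<in> tspace d0 n"
  show "mapply d0 n (mcomp d1 n f g) (Rop R0 d0 n i v) = Rop R2 d2 n i (mapply d0 n (mcomp d1 n f g) v)"
    unfolding mapply_mcomp using HomH_comm[OF g i v] HomH_comm[OF f i HomH_mapply_tspace[OF g]] by simp
qed

lemma mapply_add: "mapply d n (x + y) v = mapply d n x v + mapply d n y v"
  by (rule ext) (simp add: mapply_def distrib_right sum.distrib)

lemma mapply_scale: "mapply d n (\<lambda>w u. c * x w u) v = (\<lambda>w. c * mapply d n x v w)"
  by (rule ext) (simp add: mapply_def sum_distrib_left mult.assoc)

lemma mapply_zero: "mapply d n 0 v = 0"
  by (rule ext) (simp add: mapply_def)

lemma HomH_add: "x \<in> HomH R1 d1 R2 d2 n \<Longrightarrow> y \<in> HomH R1 d1 R2 d2 n \<Longrightarrow> x + y \<in> HomH R1 d1 R2 d2 n"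
  unfolding HomH_def by (simp add: mapply_add Rop_add)

lemma HomH_scale: "x \<in> HomH R1 d1 R2 d2 n \<Longrightarrow> (\<lambda>w u. c * x w u) \<in> HomH R1 d1 R2 d2 n"
  unfolding HomH_def by (simp add: mapply_scale Rop_scale)

lemma HomH_zero: "0 \<in> HomH R1 d1 R2 d2 n"
  unfolding HomH_def by (simp add: mapply_zero Rop_zero)

lemma mcomp_add_left: "mcomp d n (x + y) h = mcomp d n x h + mcomp d n y h"
  by (intro ext) (simp add: mcomp_def distrib_right sum.distrib)

lemma mcomp_add_right: "mcomp d n f (x + y) = mcomp d n f x + mcomp d n f y"
  by (intro ext) (simp add: mcomp_def distrib_left sum.distrib)

lemma mcomp_scale_left: "mcomp d n (\<lambda>w u. c * x w u) h = (\<lambda>w u. c * mcomp d n x h w u)"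
  by (intro ext) (simp add: mcomp_def sum_distrib_left mult.assoc)

lemma mcomp_scale_right: "mcomp d n f (\<lambda>w u. c * x w u) = (\<lambda>w u. c * mcomp d n f x w u)"
  by (intro ext) (simp add: mcomp_def sum_distrib_left mult.left_commute)

lemma mcomp_zero_left: "mcomp d n 0 h = 0"
  by (intro ext) (simp add: mcomp_def)

lemma mcomp_sum_list_left: "mcomp d n (sum_list xs) h = sum_list (map (\<lambda>x. mcomp d n x h) xs)"
proof (induction xs)
  case Nil
  show ?case by (simp only: list.map sum_list.Nil mcomp_zero_left)
next
  case (Cons x xs)
  show ?case by (simp only: list.map sum_list.Cons mcomp_add_left Cons.IH)
qed

lemma mcomp_idm: assumes "\<And>w u. w \<notin> words d n \<Longrightarrow> f w u = 0" shows "mcomp d n (idm d n) f = f"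
proof (intro ext)
  fix w u
  show "mcomp d n (idm d n) f w u = f w u"
  proof (cases "w \<in> words d n")
    case True
    then show ?thesis by (simp add: mcomp_def idm_def finite_words if_distrib[of "\<lambda>x. x * _"] cong: if_cong)
  next
    case False
    then show ?thesis using assms by (auto simp: mcomp_def idm_def intro!: sum.neutral)
  qed
qed

lemma linfun_iff: "linfun S \<psi> \<longleftrightarrow> (\<forall>x\<in>S. \<forall>y\<in>S. \<psi> (x + y) = \<psi> x + \<psi> y) \<and> (\<forall>c. \<forall>x\<in>S. \<psi> (\<lambda>w u. c * x w u) = c * \<psi> x)"
  unfolding linfun_def plus_fun_def by (rule refl)

lemma linfun_zero: assumes "linfun S \<psi>" "0 \<in> S" shows "\<psi> 0 = 0"
proof -
  have "\<psi> (\<lambda>w u. 0 * (0::nat list \<Rightarrow> nat list \<Rightarrow> 'a) w u) = 0 * \<psi> 0"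
    using assms unfolding linfun_iff by blast
  thus ?thesis by (simp add: zero_fun_def)
qed

lemma linfun_sum_list:
  assumes l: "linfun S \<psi>" and z: "0 \<in> S" and a: "\<And>x y. x \<in> S \<Longrightarrow> y \<in> S \<Longrightarrow> x + y \<in> S"
  shows "set xs \<subseteq> S \<Longrightarrow> \<psi> (sum_list xs) = sum_list (map \<psi> xs) \<and> sum_list xs \<in> S"
proof (induction xs)
  case Nil
  show ?case using linfun_zero[OF l z] z by (simp only: list.map sum_list.Nil simp_thms)
next
  case (Cons x xs)
  hence "\<psi> (sum_list xs) = sum_list (map \<psi> xs)" "sum_list xs \<in> S" "x \<in> S" by auto
  moreover have "\<psi> (x + sum_list xs) = \<psi> x + \<psi> (sum_list xs)"
    using l \<open>x \<in> S\<close> \<open>sum_list xs \<in> S\<close> unfolding linfun_iff by blast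
  ultimately show ?case using a[of x "sum_list xs"] by (simp only: list.map sum_list.Cons simp_thms)
qed

theorem lemma7p1:
  fixes q :: "'k::field" and d d' d'' :: nat
    and R R' R'' :: "nat \<Rightarrow> nat \<Rightarrow> nat \<Rightarrow> nat \<Rightarrow> 'k"
  assumes "hecke_symmetry q d R" and "hecke_symmetry q d' R'" and "hecke_symmetry q d'' R''"
    and "\<forall>n>1. \<forall>U. hsummand R' d' n U \<and> hindec R' d' n U
            \<longrightarrow> (\<exists>W. hsummand R d n W \<and> hiso R' d' n U R d W)"
  shows "\<forall>n. (\<forall>\<psi>. linfun (HomH R'' d'' R' d' n) \<psi>
                 \<longrightarrow> cotensor d n (HomH R d R' d' n) (HomH R d R d n) (HomH R'' d'' R d n) (delta d n \<psi>))
           \<and> (\<forall>\<psi>1 \<psi>2. linfun (HomH R'' d'' R' d' n) \<psi>1 \<and> linfun (HomH R'' d'' R' d' n) \<psi>2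
                 \<and> (\<forall>f\<in>HomH R d R' d' n. \<forall>h\<in>HomH R'' d'' R d n. delta d n \<psi>1 f h = delta d n \<psi>2 f h)
                 \<longrightarrow> (\<forall>z\<in>HomH R'' d'' R' d' n. \<psi>1 z = \<psi>2 z))
           \<and> (\<forall>\<Phi>. cotensor d n (HomH R d R' d' n) (HomH R d R d n) (HomH R'' d'' R d n) \<Phi>
                 \<longrightarrow> (\<exists>\<psi>. linfun (HomH R'' d'' R' d' n) \<psi>
                       \<and> (\<forall>f\<in>HomH R d R' d' n. \<forall>h\<in>HomH R'' d'' R d n. \<Phi> f h = delta d n \<psi> f h)))"
proof (rule allI, intro conjI)
  fix n
  let ?X = "HomH R d R' d' n" and ?C = "HomH R d R d n" and ?Y = "HomH R'' d'' R d n" and ?Z = "HomH R'' d'' R' d' n"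
  obtain ps where ps: "\<forall>p\<in>set ps. fst p \<in> ?X \<and> snd p \<in> HomH R' d' R d n"
      "sum_list (map (\<lambda>p. mcomp d n (fst p) (snd p)) ps) = idm d' n"
    using factors_all[OF assms(4), of n] unfolding factors_def by blast
  have psX: "fst p \<in> ?X" if "p \<in> set ps" for p using ps(1) that by blast
  have psP: "snd p \<in> HomH R' d' R d n" if "p \<in> set ps" for p using ps(1) that by blast
  have Zadd: "\<And>x y. x \<in> ?Z \<Longrightarrow> y \<in> ?Z \<Longrightarrow> x + y \<in> ?Z" by (rule HomH_add)
  have Zzero: "0 \<in> ?Z" by (rule HomH_zero)
  have comp1: "mcomp d n f h \<in> ?Z" if "f \<in> ?X" "h \<in> ?Y" for f h using mcomp_HomH[OF that] .
  have piY: "mcomp d' n (snd p) z \<in> ?Y" if "p \<in> set ps" "z \<in> ?Z" for p z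
    using mcomp_HomH[OF psP[OF that(1)] that(2)] .
  have decomp: "z = sum_list (map (\<lambda>p. mcomp d n (fst p) (mcomp d' n (snd p) z)) ps)" if "z \<in> ?Z" for z
  proof -
    have "z = mcomp d' n (idm d' n) z" using mcomp_idm[of d' n z] HomH_supp[OF that] by simp
    also have "\<dots> = mcomp d' n (sum_list (map (\<lambda>p. mcomp d n (fst p) (snd p)) ps)) z" using ps(2) by simp
    also have "\<dots> = sum_list (map (\<lambda>x. mcomp d' n x z) (map (\<lambda>p. mcomp d n (fst p) (snd p)) ps))"
      by (rule mcomp_sum_list_left)
    also have "\<dots> = sum_list (map (\<lambda>p. mcomp d n (fst p) (mcomp d' n (snd p) z)) ps)"
      by (simp only: map_map o_def mcomp_assoc)
    finally show ?thesis .
  qed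
  have inZ: "set (map (\<lambda>p. mcomp d n (fst p) (mcomp d' n (snd p) z)) ps) \<subseteq> ?Z" if "z \<in> ?Z" for z
  proof
    fix x assume "x \<in> set (map (\<lambda>p. mcomp d n (fst p) (mcomp d' n (snd p) z)) ps)"
    then obtain p where p: "p \<in> set ps" "x = mcomp d n (fst p) (mcomp d' n (snd p) z)" by auto
    show "x \<in> ?Z" unfolding p(2) by (rule comp1[OF psX[OF p(1)] piY[OF p(1) that]])
  qed
  have lsum: "\<psi> z = sum_list (map (\<lambda>p. \<psi> (mcomp d n (fst p) (mcomp d' n (snd p) z))) ps)"
    if l: "linfun ?Z \<psi>" and z: "z \<in> ?Z" for \<psi> z
  proof -
    have "\<psi> z = \<psi> (sum_list (map (\<lambda>p. mcomp d n (fst p) (mcomp d' n (snd p) z)) ps))"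
      using decomp[OF z] by simp
    also have "\<dots> = sum_list (map \<psi> (map (\<lambda>p. mcomp d n (fst p) (mcomp d' n (snd p) z)) ps))"
      using linfun_sum_list[OF l Zzero Zadd inZ[OF z]] by (rule conjunct1)
    finally show ?thesis by (simp only: map_map o_def)
  qed
  show "\<forall>\<psi>. linfun ?Z \<psi> \<longrightarrow> cotensor d n ?X ?C ?Y (delta d n \<psi>)"
  proof (intro allI impI)
    fix \<psi> assume l: "linfun ?Z \<psi>"
    have laall: "\<forall>x\<in>?Z. \<forall>y\<in>?Z. \<psi> (x + y) = \<psi> x + \<psi> y" using l unfolding linfun_iff by (rule conjunct1)
    have lsall: "\<forall>c. \<forall>x\<in>?Z. \<psi> (\<lambda>w u. c * x w u) = c * \<psi> x" using l unfolding linfun_iff by (rule conjunct2)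
    have la: "\<psi> (x + y) = \<psi> x + \<psi> y" if "x \<in> ?Z" "y \<in> ?Z" for x y
      by (rule laall[rule_format, OF that])
    have ls: "\<psi> (\<lambda>w u. c * x w u) = c * \<psi> x" if "x \<in> ?Z" for x c
      by (rule lsall[rule_format, OF that])
    have b1: "\<forall>y\<in>?Y. linfun ?X (\<lambda>x. delta d n \<psi> x y)"
      unfolding linfun_iff delta_def
    proof (intro ballI conjI allI)
      fix y x1 x2 assume a: "y \<in> ?Y" "x1 \<in> ?X" "x2 \<in> ?X"
      show "\<psi> (mcomp d n (x1 + x2) y) = \<psi> (mcomp d n x1 y) + \<psi> (mcomp d n x2 y)"
        unfolding mcomp_add_left by (rule la[OF comp1[OF a(2) a(1)] comp1[OF a(3) a(1)]])
    next
      fix y c x1 assume a: "y \<in> ?Y" "x1 \<in> ?X"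
      show "\<psi> (mcomp d n (\<lambda>w u. c * x1 w u) y) = c * \<psi> (mcomp d n x1 y)"
        unfolding mcomp_scale_left by (rule ls[OF comp1[OF a(2) a(1)]])
    qed
    have b2: "\<forall>x\<in>?X. linfun ?Y (\<lambda>y. delta d n \<psi> x y)"
      unfolding linfun_iff delta_def
    proof (intro ballI conjI allI)
      fix x y1 y2 assume a: "x \<in> ?X" "y1 \<in> ?Y" "y2 \<in> ?Y"
      show "\<psi> (mcomp d n x (y1 + y2)) = \<psi> (mcomp d n x y1) + \<psi> (mcomp d n x y2)"
        unfolding mcomp_add_right by (rule la[OF comp1[OF a(1) a(2)] comp1[OF a(1) a(3)]])
    next
      fix x c y1 assume a: "x \<in> ?X" "y1 \<in> ?Y"
      show "\<psi> (mcomp d n x (\<lambda>w u. c * y1 w u)) = c * \<psi> (mcomp d n x y1)"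
        unfolding mcomp_scale_right by (rule ls[OF comp1[OF a(1) a(2)]])
    qed
    have b3: "\<forall>f\<in>?X. \<forall>g\<in>?C. \<forall>h\<in>?Y. delta d n \<psi> (mcomp d n f g) h = delta d n \<psi> f (mcomp d n g h)"
      unfolding delta_def mcomp_assoc by (intro ballI refl)
    show "cotensor d n ?X ?C ?Y (delta d n \<psi>)"
      unfolding cotensor_def bilin_def by (intro conjI b1 b2 b3)
  qed
  show "\<forall>\<psi>1 \<psi>2. linfun ?Z \<psi>1 \<and> linfun ?Z \<psi>2
                 \<and> (\<forall>f\<in>?X. \<forall>h\<in>?Y. delta d n \<psi>1 f h = delta d n \<psi>2 f h)
                 \<longrightarrow> (\<forall>z\<in>?Z. \<psi>1 z = \<psi>2 z)"
  proof (intro allI impI ballI)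
    fix \<psi>1 \<psi>2 z
    assume h: "linfun ?Z \<psi>1 \<and> linfun ?Z \<psi>2 \<and> (\<forall>f\<in>?X. \<forall>h\<in>?Y. delta d n \<psi>1 f h = delta d n \<psi>2 f h)"
      and z: "z \<in> ?Z"
    have hd: "\<forall>f\<in>?X. \<forall>h\<in>?Y. delta d n \<psi>1 f h = delta d n \<psi>2 f h" using h by (elim conjE)
    have eq: "\<psi>1 (mcomp d n (fst p) (mcomp d' n (snd p) z)) = \<psi>2 (mcomp d n (fst p) (mcomp d' n (snd p) z))"
      if "p \<in> set ps" for p
      using hd[rule_format, OF psX[OF that] piY[OF that z]] unfolding delta_def .
    have "\<psi>1 z = sum_list (map (\<lambda>p. \<psi>1 (mcomp d n (fst p) (mcomp d' n (snd p) z))) ps)"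
      by (rule lsum[OF conjunct1[OF h] z])
    also have "\<dots> = sum_list (map (\<lambda>p. \<psi>2 (mcomp d n (fst p) (mcomp d' n (snd p) z))) ps)"
      by (intro arg_cong[where f=sum_list] map_cong refl eq)
    also have "\<dots> = \<psi>2 z" by (rule lsum[OF conjunct1[OF conjunct2[OF h]] z, symmetric])
    finally show "\<psi>1 z = \<psi>2 z" .
  qed
  show "\<forall>\<Phi>. cotensor d n ?X ?C ?Y \<Phi>
                 \<longrightarrow> (\<exists>\<psi>. linfun ?Z \<psi>
                       \<and> (\<forall>f\<in>?X. \<forall>h\<in>?Y. \<Phi> f h = delta d n \<psi> f h))"
  proof (intro allI impI)
    fix \<Phi> assume ct: "cotensor d n ?X ?C ?Y \<Phi>"
    have ct1: "bilin ?X ?Y \<Phi>" using ct unfolding cotensor_def by (rule conjunct1)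
    have ct2: "\<forall>f\<in>?X. \<forall>g\<in>?C. \<forall>h\<in>?Y. \<Phi> (mcomp d n f g) h = \<Phi> f (mcomp d n g h)"
      using ct unfolding cotensor_def by (rule conjunct2)
    have lin1: "linfun ?X (\<lambda>x. \<Phi> x y)" if "y \<in> ?Y" for y
      by (rule bspec[OF conjunct1[OF ct1[unfolded bilin_def]] that])
    have lin2: "linfun ?Y (\<lambda>y. \<Phi> x y)" if "x \<in> ?X" for x
      by (rule bspec[OF conjunct2[OF ct1[unfolded bilin_def]] that])
    have bal: "\<Phi> (mcomp d n f g) h = \<Phi> f (mcomp d n g h)" if "f \<in> ?X" "g \<in> ?C" "h \<in> ?Y" for f g h
      by (rule ct2[rule_format, OF that])
    define \<psi> where "\<psi> = (\<lambda>z. sum_list (map (\<lambda>p. \<Phi> (fst p) (mcomp d' n (snd p) z)) ps))"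
    have l2a: "\<Phi> x (y1 + y2) = \<Phi> x y1 + \<Phi> x y2" if "x \<in> ?X" "y1 \<in> ?Y" "y2 \<in> ?Y" for x y1 y2
    proof -
      have "\<forall>a\<in>?Y. \<forall>b\<in>?Y. (\<lambda>y. \<Phi> x y) (a + b) = (\<lambda>y. \<Phi> x y) a + (\<lambda>y. \<Phi> x y) b"
        using lin2[OF that(1)] unfolding linfun_iff by (rule conjunct1)
      thus ?thesis using that(2,3) by simp
    qed
    have l2s: "\<Phi> x (\<lambda>w u. c * y w u) = c * \<Phi> x y" if "x \<in> ?X" "y \<in> ?Y" for x y c
    proof -
      have "\<forall>c. \<forall>a\<in>?Y. (\<lambda>y. \<Phi> x y) (\<lambda>w u. c * a w u) = c * (\<lambda>y. \<Phi> x y) a"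
        using lin2[OF that(1)] unfolding linfun_iff by (rule conjunct2)
      from this[rule_format, OF that(2)] show ?thesis by simp
    qed
    have Lpsi: "linfun ?Z \<psi>"
      unfolding linfun_iff
    proof (intro ballI conjI allI)
      fix z1 z2 assume z: "z1 \<in> ?Z" "z2 \<in> ?Z"
      have "\<psi> (z1 + z2) = sum_list (map (\<lambda>p. \<Phi> (fst p) (mcomp d' n (snd p) z1) + \<Phi> (fst p) (mcomp d' n (snd p) z2)) ps)"
        unfolding \<psi>_def mcomp_add_right
        by (intro arg_cong[where f=sum_list] map_cong refl l2a psX piY z)
      also have "\<dots> = \<psi> z1 + \<psi> z2" unfolding \<psi>_def by (rule sum_list_addf)
      finally show "\<psi> (z1 + z2) = \<psi> z1 + \<psi> z2" .
    next
      fix c z1 assume z: "z1 \<in> ?Z"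
      have "\<psi> (\<lambda>w u. c * z1 w u) = sum_list (map (\<lambda>p. c * \<Phi> (fst p) (mcomp d' n (snd p) z1)) ps)"
        unfolding \<psi>_def mcomp_scale_right
        by (intro arg_cong[where f=sum_list] map_cong refl l2s psX piY z)
      also have "\<dots> = c * \<psi> z1" unfolding \<psi>_def by (rule sum_list_const_mult)
      finally show "\<psi> (\<lambda>w u. c * z1 w u) = c * \<psi> z1" .
    qed
    have Dpsi: "\<Phi> f h = delta d n \<psi> f h" if f: "f \<in> ?X" and h: "h \<in> ?Y" for f h
    proof -
      have "delta d n \<psi> f h = sum_list (map (\<lambda>p. \<Phi> (fst p) (mcomp d' n (snd p) (mcomp d n f h))) ps)"
        unfolding delta_def \<psi>_def ..
      also have "\<dots> = sum_list (map (\<lambda>p. \<Phi> (mcomp d' n (mcomp d n (fst p) (snd p)) f) h) ps)"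
      proof (intro arg_cong[where f=sum_list] map_cong refl)
        fix p assume p: "p \<in> set ps"
        have g: "mcomp d' n (snd p) f \<in> ?C" by (rule mcomp_HomH[OF psP[OF p] f])
        have "\<Phi> (fst p) (mcomp d' n (snd p) (mcomp d n f h)) = \<Phi> (fst p) (mcomp d n (mcomp d' n (snd p) f) h)"
          by (simp only: mcomp_assoc)
        also have "\<dots> = \<Phi> (mcomp d n (fst p) (mcomp d' n (snd p) f)) h"
          by (rule bal[OF psX[OF p] g h, symmetric])
        also have "\<dots> = \<Phi> (mcomp d' n (mcomp d n (fst p) (snd p)) f) h" by (simp only: mcomp_assoc)
        finally show "\<Phi> (fst p) (mcomp d' n (snd p) (mcomp d n f h)) = \<Phi> (mcomp d' n (mcomp d n (fst p) (snd p)) f) h" .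
      qed
      also have "\<dots> = \<Phi> (sum_list (map (\<lambda>p. mcomp d' n (mcomp d n (fst p) (snd p)) f) ps)) h"
      proof -
        have Xa: "\<And>x y. x \<in> ?X \<Longrightarrow> y \<in> ?X \<Longrightarrow> x + y \<in> ?X" by (rule HomH_add)
        have sub: "set (map (\<lambda>p. mcomp d' n (mcomp d n (fst p) (snd p)) f) ps) \<subseteq> ?X"
        proof
          fix x assume "x \<in> set (map (\<lambda>p. mcomp d' n (mcomp d n (fst p) (snd p)) f) ps)"
          then obtain p where p: "p \<in> set ps" "x = mcomp d' n (mcomp d n (fst p) (snd p)) f" by auto
          show "x \<in> ?X" unfolding p(2) by (rule mcomp_HomH[OF mcomp_HomH[OF psX[OF p(1)] psP[OF p(1)]] f])
        qed
        have "(\<lambda>x. \<Phi> x h) (sum_list (map (\<lambda>p. mcomp d' n (mcomp d n (fst p) (snd p)) f) ps))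
           = sum_list (map (\<lambda>x. \<Phi> x h) (map (\<lambda>p. mcomp d' n (mcomp d n (fst p) (snd p)) f) ps))"
          using linfun_sum_list[OF lin1[OF h] HomH_zero Xa sub] by (rule conjunct1)
        thus ?thesis by (simp only: map_map o_def)
      qed
      also have "\<dots> = \<Phi> (mcomp d' n (idm d' n) f) h"
        using ps(2) mcomp_sum_list_left[of d' n "map (\<lambda>p. mcomp d n (fst p) (snd p)) ps" f]
        by (simp only: map_map o_def)
      also have "\<dots> = \<Phi> f h" using mcomp_idm[of d' n f] HomH_supp[OF f] by simp
      finally show ?thesis by simp
    qed
    show "\<exists>\<psi>. linfun ?Z \<psi> \<and> (\<forall>f\<in>?X. \<forall>h\<in>?Y. \<Phi> f h = delta d n \<psi> f h)"
    proof (intro exI[of _ \<psi>] conjI ballI)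
      show "linfun ?Z \<psi>" by (rule Lpsi)
    next
      fix f h assume "f \<in> ?X" "h \<in> ?Y"
      thus "\<Phi> f h = delta d n \<psi> f h" by (rule Dpsi)
    qed
  qed
qed

end
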